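(* Assume hypothesis (A). For every $\gamma\in\mathbb{R}_+^d$ and every $1\le i\le d$, the function $f_i(x)=\exp(\overrightarrow{\gamma_i}\cdot x)$ satisfies $$\mathcal{L}f_i(x)=\frac{\gamma_i}{G_{ii}}\Bigl(\nu_i-\mathbf{1}_{\{x^i>0\}}\frac{\mu_i}{1+\gamma_i}\Bigr)f_i(x),\qquad x\in\mathbb{Z}_+^d.$$
   Context: Jackson network with $d$ queues: arrival rates $\lambda_i\ge0$, service rates $\mu_i>0$, routing matrix $P=(p_{ij})_{i,j=1}^d$ nonnegative with $p_{ii}=0$, $\sum_jp_{ij}\le1$, $p_{i0}=1-\sum_jp_{ij}$. With $\epsilon^i$ the unit vectors, $q(\epsilon^i)=\lambda_i$, $q(-\epsilon^i)=\mu_ip_{i0}$, $q(\epsilon^j-\epsilon^i)=\mu_ip_{ij}$, $q=0$ otherwise; the process on $\mathbb{Z}_+^d$ has generator $\mathcal{L}f(y)=\sum_{z\in\mathbb{Z}_+^d}q(z-y)(f(z)-f(y))$. Hypothesis (A): $(q(x-y))_{x,y\in\mathbb{Z}^d}$ irreducible (equivalently spectral radius of $P$ $<1$ and for every $i$ some $\lambda_jp^{(n)}_{ji}>0$); then the traffic equations $\nu_j=\lambda_j+\sum_i\nu_ip_{ij}$ have a unique solution. $G=(I-P)^{-1}$. $Q_{ij}$: probability that the chain on $\{0,\dots,d\}$ with transitions $p_{ij}$ ($0$ absorbing) started at $i$ ever visits $j$ (time $0$ included). For $\gamma\in\mathbb{R}_+^d$, $\overrightarrow{\gamma_i}=(\gamma_i^1,\dots,\gamma_i^d)$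 with $\gamma_i^j=\log(1+Q_{ji}\gamma_i)$. *)

theory Defs
  imports "HOL-Analysis.Analysis"
begin

text \<open>Queues are indexed by a finite type 'n (so d = CARD('n)); the routing matrix is
  P :: real^'n^'n with p_ij = P$i$j; the exit probability is p_i0 = 1 - sum_j p_ij.\<close>

definition unitv :: "'n \<Rightarrow> ('n \<Rightarrow> int)" where
  "unitv i = (\<lambda>j. if j = i then 1 else 0)"

definition exit_prob :: "real^'n^'n \<Rightarrow> 'n::finite \<Rightarrow> real" where
  "exit_prob P i = 1 - (\<Sum>j\<in>UNIV. P$i$j)"

definition jrate :: "('n \<Rightarrow> real) \<Rightarrow> ('n \<Rightarrow> real) \<Rightarrow> real^'n^'n \<Rightarrow> ('n::finite \<Rightarrow> int) \<Rightarrow> real" where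
  "jrate lam mu P z =
     (\<Sum>i\<in>UNIV. (if z = unitv i then lam i else 0)
              + (if z = - unitv i then mu i * exit_prob P i else 0)
              + (\<Sum>j\<in>UNIV. if j \<noteq> i \<and> z = unitv j - unitv i then mu i * P$i$j else 0))"

definition nonneg_states :: "('n \<Rightarrow> int) set" where
  "nonneg_states = {x. \<forall>i. 0 \<le> x i}"

definition generator :: "('n \<Rightarrow> real) \<Rightarrow> ('n \<Rightarrow> real) \<Rightarrow> real^'n^'n
     \<Rightarrow> (('n::finite \<Rightarrow> int) \<Rightarrow> real) \<Rightarrow> ('n \<Rightarrow> int) \<Rightarrow> real" where
  "generator lam mu P f y =
     infsum (\<lambda>z. jrate lam mu P (z - y) * (f z - f y)) nonneg_states"

definition hypA :: "('n \<Rightarrow> real) \<Rightarrow> ('n \<Rightarrow> real) \<Rightarrow> real^'n^'n::finite \<Rightarrow> bool" where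
  "hypA lam mu P \<longleftrightarrow>
     (\<forall>x y. (x, y) \<in> {(a, b). jrate lam mu P (b - a) > 0}\<^sup>*)"

text \<open>First-passage probabilities of the routing chain on {0,...,d} (0 absorbing, i.e.
  the substochastic chain killed at exit): probability that the chain started at i
  visits j for the first time at step n (n = 0 allowed).\<close>
fun first_pass :: "real^'n^'n \<Rightarrow> nat \<Rightarrow> 'n::finite \<Rightarrow> 'n \<Rightarrow> real" where
  "first_pass P 0 i j = (if i = j then 1 else 0)"
| "first_pass P (Suc n) i j =
     (if i = j then 0 else (\<Sum>k\<in>UNIV. P$i$k * first_pass P n k j))"

definition hitQ :: "real^'n^'n \<Rightarrow> 'n::finite \<Rightarrow> 'n \<Rightarrow> real" where
  "hitQ P i j = (\<Sum>n. first_pass P n i j)"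

definition greenG :: "real^'n^'n \<Rightarrow> real^'n^'n::finite" where
  "greenG P = matrix_inv (mat 1 - P)"

end

theory Submission
  imports Defs
begin


lemma fp_nonneg:
  assumes "\<And>i j. 0 \<le> P$i$j"
  shows "0 \<le> first_pass P n k i"
  by (induction n arbitrary: k) (auto intro!: sum_nonneg mult_nonneg_nonneg assms)

lemma fp_partial:
  assumes "\<And>i j. 0 \<le> P$i$j" "\<And>i. (\<Sum>j\<in>UNIV. P$i$j) \<le> 1"
  shows "(\<Sum>n<N. first_pass P n k i) \<le> 1"
proof (induction N arbitrary: k)
  case 0 then show ?case by simp
next
  case (Suc N)
  show ?case
  proof (cases "k = i")
    case True
    then show ?thesis by (simp only: sum.lessThan_Suc_shift) simp
  next
    case False
    have "(\<Sum>n<Suc N. first_pass P n k i) = (\<Sum>n<N. \<Sum>m\<in>UNIV. P$k$m * first_pass P n m i)"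
      using False by (simp only: sum.lessThan_Suc_shift) simp
    also have "\<dots> = (\<Sum>m\<in>UNIV. P$k$m * (\<Sum>n<N. first_pass P n m i))"
      by (subst sum.swap) (simp add: sum_distrib_left)
    also have "\<dots> \<le> (\<Sum>m\<in>UNIV. P$k$m * 1)"
      by (intro sum_mono mult_left_mono Suc assms)
    also have "\<dots> \<le> 1" using assms(2)[of k] by simp
    finally show ?thesis .
  qed
qed

lemma fp_summable:
  assumes "\<And>i j. 0 \<le> P$i$j" "\<And>i. (\<Sum>j\<in>UNIV. P$i$j) \<le> 1"
  shows "summable (\<lambda>n. first_pass P n k i)"
  by (rule summableI_nonneg_bounded[where x=1]) (auto intro: fp_nonneg[OF assms(1)] fp_partial[OF assms])

lemma hitQ_diag: "hitQ P i i = 1"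
proof -
  have "(\<lambda>n. first_pass P n i i) = (\<lambda>n. if n = 0 then 1 else 0)"
    by (rule ext, case_tac n) auto
  moreover have "(\<lambda>n::nat. if n = 0 then 1 else 0) sums (1::real)"
    using sums_single[of 0 "\<lambda>_. 1::real"] by simp
  ultimately show ?thesis unfolding hitQ_def by (simp add: sums_iff)
qed

lemma hitQ_nonneg:
  assumes "\<And>i j. 0 \<le> P$i$j" "\<And>i. (\<Sum>j\<in>UNIV. P$i$j) \<le> 1"
  shows "0 \<le> hitQ P k i"
  unfolding hitQ_def by (intro suminf_nonneg fp_summable assms fp_nonneg)

lemma hitQ_step:
  assumes "\<And>i j. 0 \<le> P$i$j" "\<And>i. (\<Sum>j\<in>UNIV. P$i$j) \<le> 1" and "k \<noteq> i"
  shows "hitQ P k i = (\<Sum>m\<in>UNIV. P$k$m * hitQ P m i)"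
proof -
  have s: "summable (\<lambda>n. first_pass P n k i)" by (intro fp_summable assms)
  have "hitQ P k i = (\<Sum>n. first_pass P (Suc n) k i)"
    using suminf_split_head[OF s] assms(3) unfolding hitQ_def by simp
  also have "\<dots> = (\<Sum>n. \<Sum>m\<in>UNIV. P$k$m * first_pass P n m i)"
    using assms(3) by simp
  also have "\<dots> = (\<Sum>m\<in>UNIV. \<Sum>n. P$k$m * first_pass P n m i)"
    by (rule suminf_sum) (intro summable_mult fp_summable assms)
  also have "\<dots> = (\<Sum>m\<in>UNIV. P$k$m * hitQ P m i)"
    unfolding hitQ_def by (intro sum.cong refl suminf_mult fp_summable assms)
  finally show ?thesis .
qed

lemma phi_unitv: "(\<Sum>c\<in>C. unitv (i::'n::finite) c) = (if i \<in> C then 1 else (0::int))"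
  unfolding unitv_def by (simp add: sum.delta)

lemma jrate_pos_phi:
  fixes P :: "real^'n^'n::finite"
  assumes mu_pos: "\<And>i. 0 < mu i"
    and closedC: "\<And>j k. j \<in> C \<Longrightarrow> 0 < P$j$k \<Longrightarrow> k \<in> C"
    and rowsC: "\<And>j. j \<in> C \<Longrightarrow> (\<Sum>k\<in>UNIV. P$j$k) = 1"
    and pos: "jrate lam mu P z > 0"
  shows "(\<Sum>c\<in>C. z c) \<ge> 0"
proof (rule ccontr)
  assume neg: "\<not> (\<Sum>c\<in>C. z c) \<ge> 0"
  have "jrate lam mu P z \<le> 0" unfolding jrate_def
  proof (rule sum_nonpos)
    fix i
    have "(if z = unitv i then lam i else 0) \<le> 0"
      using neg phi_unitv[where C=C and i=i] by (auto split: if_splits)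
    moreover have "(if z = - unitv i then mu i * exit_prob P i else 0) \<le> 0"
    proof (cases "z = - unitv i")
      case True
      then have "i \<in> C" using neg phi_unitv[where C=C and i=i] by (auto simp: sum_negf split: if_splits)
      then have "exit_prob P i = 0" using rowsC unfolding exit_prob_def by simp
      then show ?thesis by simp
    qed simp
    moreover have "(\<Sum>j\<in>UNIV. if j \<noteq> i \<and> z = unitv j - unitv i then mu i * P$i$j else 0) \<le> 0"
    proof (intro sum_nonpos)
      fix j
      show "(if j \<noteq> i \<and> z = unitv j - unitv i then mu i * P$i$j else 0) \<le> 0"
      proof (cases "j \<noteq> i \<and> z = unitv j - unitv i")
        case True
        then have "(\<Sum>c\<in>C. z c) = (\<Sum>c\<in>C. unitv j c) - (\<Sum>c\<in>C. unitv i c)"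
          by (simp add: sum_subtractf)
        then have "i \<in> C" "j \<notin> C" using neg phi_unitv[where C=C and i=i] phi_unitv[where C=C and i=j]
          by (auto split: if_splits)
        then have "P$i$j \<le> 0" using closedC[of i j] by force
        then show ?thesis using True mu_pos[of i] 
          by (simp add: mult_nonneg_nonpos)
      qed auto
    qed
    ultimately show "(if z = unitv i then lam i else 0)
              + (if z = - unitv i then mu i * exit_prob P i else 0)
              + (\<Sum>j\<in>UNIV. if j \<noteq> i \<and> z = unitv j - unitv i then mu i * P$i$j else 0) \<le> 0"
      by linarith
  qed
  with pos show False by simp
qed

lemma no_pos_fixed:
  fixes P :: "real^'n^'n::finite" and w :: "real^'n"
  assumes mu_pos: "\<And>i. 0 < mu i"
    and P_nonneg: "\<And>i j. 0 \<le> P$i$j"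
    and P_rows: "\<And>i. (\<Sum>j\<in>UNIV. P$i$j) \<le> 1"
    and A: "hypA lam mu P"
    and fixw: "P *v w = w" and pos: "w$j0 > 0"
  shows False
proof -
  define M where "M = Max (range (\<lambda>j. w$j))"
  define C where "C = {j. w$j = M}"
  have Mge: "w$j \<le> M" for j unfolding M_def by (rule Max_ge) auto
  have "M \<in> range (\<lambda>j. w$j)" unfolding M_def by (rule Max_in) auto
  then obtain c where c: "w$c = M" by auto
  have Mpos: "M > 0" using Mge[of j0] pos by simp
  have fx: "w$j = (\<Sum>k\<in>UNIV. P$j$k * w$k)" for j
    using arg_cong[OF fixw, of "\<lambda>v. v$j"] by (simp add: matrix_vector_mult_def)
  have key: "(\<Sum>k\<in>UNIV. P$j$k) = 1 \<and> (\<forall>k. 0 < P$j$k \<longrightarrow> k \<in> C)" if "j \<in> C" for j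
  proof -
    have wj: "w$j = M" using that unfolding C_def by simp
    have "(\<Sum>k\<in>UNIV. P$j$k * (M - w$k)) = (\<Sum>k\<in>UNIV. P$j$k) * M - (\<Sum>k\<in>UNIV. P$j$k * w$k)"
      by (simp add: right_diff_distrib sum_subtractf sum_distrib_right)
    also have "\<dots> = M * (\<Sum>k\<in>UNIV. P$j$k) - M" using fx[of j] wj by (metis mult.commute)
    finally have e: "(\<Sum>k\<in>UNIV. P$j$k * (M - w$k)) = M * (\<Sum>k\<in>UNIV. P$j$k) - M" .
    have le: "M * (\<Sum>k\<in>UNIV. P$j$k) \<le> M" using P_rows[of j] Mpos by simp
    have nn: "\<And>k. 0 \<le> P$j$k * (M - w$k)" using P_nonneg Mge by simp
    have s0: "(\<Sum>k\<in>UNIV. P$j$k * (M - w$k)) = 0"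
    proof -
      have "0 \<le> (\<Sum>k\<in>UNIV. P$j$k * (M - w$k))" by (rule sum_nonneg) (use nn in auto)
      then show ?thesis using e le by linarith
    qed
    then have z: "\<forall>k. P$j$k * (M - w$k) = 0"
      using sum_nonneg_eq_0_iff[of UNIV "\<lambda>k. P$j$k * (M - w$k)"] nn by simp
    have "M * (\<Sum>k\<in>UNIV. P$j$k) = M * 1" using e s0 by simp
    then have "(\<Sum>k\<in>UNIV. P$j$k) = 1" using Mpos by simp
    moreover have "\<forall>k. 0 < P$j$k \<longrightarrow> k \<in> C"
    proof (intro allI impI)
      fix k assume "0 < P$j$k"
      moreover have "P$j$k * (M - w$k) = 0" using z by blast
      ultimately show "k \<in> C" unfolding C_def by simp
    qed
    ultimately show ?thesis by blast
  qed
  define phi where "phi = (\<lambda>z::'n \<Rightarrow> int. \<Sum>c\<in>C. z c)"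
  have stepR: "phi a \<le> phi b" if "(a, b) \<in> {(a, b). jrate lam mu P (b - a) > 0}" for a b
  proof -
    have j: "jrate lam mu P (b - a) > 0" using that by simp
    have "0 \<le> (\<Sum>c\<in>C. (b - a) c)"
      by (rule jrate_pos_phi[OF mu_pos _ _ j]) (use key in blast)+
    then show ?thesis unfolding phi_def by (simp add: sum_subtractf)
  qed
  have mono: "phi a \<le> phi b" if "(a, b) \<in> {(a, b). jrate lam mu P (b - a) > 0}\<^sup>*" for a b
    using that
  proof (induction rule: rtrancl_induct)
    case base then show ?case by simp
  next
    case (step y z)
    then show ?case using stepR[of y z] by simp
  qed
  have r: "((\<lambda>_. 0) :: 'n \<Rightarrow> int, - unitv c) \<in> {(a, b). jrate lam mu P (b - a) > 0}\<^sup>*"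
    using A unfolding hypA_def by (rule spec[where x="- unitv c", OF spec[where x="(\<lambda>_. 0) :: 'n \<Rightarrow> int"]])
  have "phi (\<lambda>_. 0) \<le> phi (- unitv c)" by (rule mono[OF r])
  moreover have "phi (- unitv c) = - phi (unitv c)" unfolding phi_def by (simp add: sum_negf)
  moreover have "c \<in> C" using c unfolding C_def by simp
  then have "phi (unitv c) = 1" unfolding phi_def using phi_unitv[where C=C and i=c] by simp
  moreover have "phi (\<lambda>_. 0) = 0" unfolding phi_def by simp
  ultimately show False by linarith
qed

lemma invertible_IP:
  fixes P :: "real^'n^'n::finite"
  assumes mu_pos: "\<And>i. 0 < mu i"
    and P_nonneg: "\<And>i j. 0 \<le> P$i$j"
    and P_rows: "\<And>i. (\<Sum>j\<in>UNIV. P$i$j) \<le> 1"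
    and A: "hypA lam mu P"
  shows "invertible (mat 1 - P)"
proof (rule ccontr)
  assume "\<not> invertible (mat 1 - P)"
  then have "\<not> (\<forall>x. (mat 1 - P) *v x = 0 \<longrightarrow> x = 0)"
    using invertible_left_inverse matrix_left_invertible_ker by blast
  then obtain v where v: "(mat 1 - P) *v v = 0" "v \<noteq> 0" by blast
  have fv: "P *v v = v" using v(1) by (simp add: matrix_vector_mult_diff_rdistrib)
  then have fmv: "P *v (- v) = - v" by (metis diff_0 matrix_vector_mult_diff_distrib matrix_vector_mult_0_right)
  obtain j where "v$j \<noteq> 0" using v(2) by (metis vec_eq_iff zero_index)
  then consider "v$j > 0" | "(-v)$j > 0" by force
  then show False
  proof cases
    case 1 then show ?thesis using no_pos_fixed[OF mu_pos P_nonneg P_rows A fv] by blast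
  next
    case 2 then show ?thesis using no_pos_fixed[OF mu_pos P_nonneg P_rows A fmv] by blast
  qed
qed

lemma dsum1: "(\<Sum>k\<in>UNIV. (if (j::'n::finite) = k then 1 else 0) * g k) = (g j :: real)"
proof -
  have "(\<Sum>k\<in>UNIV. (if j = k then 1 else 0) * g k) = (\<Sum>k\<in>UNIV. (if j = k then g k else 0))"
    by (rule sum.cong) auto
  then show ?thesis by simp
qed

lemma dsum2: "(\<Sum>k\<in>UNIV. g k * (if k = (j::'n::finite) then 1 else 0)) = (g j :: real)"
proof -
  have "(\<Sum>k\<in>UNIV. g k * (if k = j then 1 else 0)) = (\<Sum>k\<in>UNIV. (if j = k then g k else 0))"
    by (rule sum.cong) auto
  then show ?thesis by simp
qed

lemma lin_facts:
  fixes P :: "real^'n^'n::finite" and lam nu :: "'n \<Rightarrow> real" and q :: "'n \<Rightarrow> real"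
  assumes inv: "invertible (mat 1 - P)"
    and traffic: "\<And>j. nu j = lam j + (\<Sum>i\<in>UNIV. nu i * P$i$j)"
    and qi: "q i = 1"
    and qstep: "\<And>k. k \<noteq> i \<Longrightarrow> q k = (\<Sum>m\<in>UNIV. P$k$m * q m)"
  shows "1 = (1 - (\<Sum>m\<in>UNIV. P$i$m * q m)) * (greenG P)$i$i"
    and "(\<Sum>j\<in>UNIV. lam j * q j) = (1 - (\<Sum>m\<in>UNIV. P$i$m * q m)) * nu i"
proof -
  define H where "H = greenG P"
  define s where "s = (\<Sum>m\<in>UNIV. P$i$m * q m)"
  have HL: "H ** (mat 1 - P) = mat 1" and HR: "(mat 1 - P) ** H = mat 1"
    using someI_ex[OF inv[unfolded invertible_def]] unfolding H_def greenG_def matrix_inv_def by auto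
  have ent: "(A ** B)$a$b = (\<Sum>k\<in>UNIV. A$a$k * B$k$b)" for A B :: "real^'n^'n" and a b
    by (simp add: matrix_matrix_mult_def)
  have IP: "(mat 1 - P)$a$b = (if a = b then 1 else 0) - P$a$b" for a b
    by (simp add: mat_def)
  have r: "(\<Sum>k\<in>UNIV. (mat 1 - P)$m$k * q k) = (if m = i then 1 - s else 0)" for m
  proof -
    have "(\<Sum>k\<in>UNIV. (mat 1 - P)$m$k * q k) = (\<Sum>k\<in>UNIV. (if m = k then 1 else 0) * q k) - (\<Sum>k\<in>UNIV. P$m$k * q k)"
      unfolding IP by (simp only: left_diff_distrib sum_subtractf)
    also have "(\<Sum>k\<in>UNIV. (if m = k then 1 else 0) * q k) = (\<Sum>k\<in>UNIV. (if m = k then q k else 0))"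
      by (rule sum.cong) auto
    also have "\<dots> = q m" by simp
    finally show ?thesis using qi qstep[of m] unfolding s_def by auto
  qed
  have Q: "q j = (1 - s) * H$j$i" for j
  proof -
    have "q j = (\<Sum>k\<in>UNIV. (H ** (mat 1 - P))$j$k * q k)" unfolding HL by (simp add: mat_def dsum1)
    also have "\<dots> = (\<Sum>m\<in>UNIV. H$j$m * (\<Sum>k\<in>UNIV. (mat 1 - P)$m$k * q k))"
      unfolding ent by (simp add: sum_distrib_left sum_distrib_right mult.assoc) (rule sum.swap)
    also have "\<dots> = (1 - s) * H$j$i" unfolding r by (simp add: if_distrib cong: if_cong)
    finally show ?thesis .
  qed
  have N: "nu i = (\<Sum>j\<in>UNIV. lam j * H$j$i)"
  proof -
    have "nu i = (\<Sum>j\<in>UNIV. nu j * ((mat 1 - P) ** H)$j$i)" unfolding HR by (simp add: mat_def dsum2)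
    also have "\<dots> = (\<Sum>m\<in>UNIV. (\<Sum>j\<in>UNIV. nu j * (mat 1 - P)$j$m) * H$m$i)"
      unfolding ent by (simp add: sum_distrib_left sum_distrib_right mult.assoc) (rule sum.swap)
    also have "\<dots> = (\<Sum>m\<in>UNIV. lam m * H$m$i)"
    proof (rule sum.cong[OF refl])
      fix m
      have "(\<Sum>j\<in>UNIV. nu j * (mat 1 - P)$j$m) = nu m - (\<Sum>j\<in>UNIV. nu j * P$j$m)"
        unfolding IP by (simp add: right_diff_distrib sum_subtractf dsum2)
      then show "(\<Sum>j\<in>UNIV. nu j * (mat 1 - P)$j$m) * H$m$i = lam m * H$m$i"
        using traffic[of m] by simp
    qed
    finally show ?thesis .
  qed
  show "1 = (1 - (\<Sum>m\<in>UNIV. P$i$m * q m)) * (greenG P)$i$i"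
    using Q[of i] qi unfolding s_def H_def by simp
  show "(\<Sum>j\<in>UNIV. lam j * q j) = (1 - (\<Sum>m\<in>UNIV. P$i$m * q m)) * nu i"
  proof -
    have "(\<Sum>j\<in>UNIV. lam j * q j) = (1 - s) * nu i"
      unfolding N by (simp add: Q sum_distrib_left mult.left_commute)
    then show ?thesis unfolding s_def .
  qed
qed



lemma has_sum_single_if:
  "((\<lambda>z. if Q \<and> z = a then c else 0) has_sum (if Q \<and> a \<in> A then c else (0::real))) A"
proof (cases "Q \<and> a \<in> A")
  case True
  have "((\<lambda>z. if Q \<and> z = a then c else 0) has_sum c) {a}"
    using has_sum_finite[of "{a}" "\<lambda>z. if Q \<and> z = a then c else 0"] True by simp
  then have "((\<lambda>z. if Q \<and> z = a then c else 0) has_sum c) A"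
    by (subst has_sum_cong_neutral[where T="{a}" and g="\<lambda>z. if Q \<and> z = a then c else 0"]) (use True in auto)
  then show ?thesis using True by simp
next
  case False
  have "((\<lambda>z. if Q \<and> z = a then c else 0) has_sum 0) A"
    by (rule has_sum_0) (use False in auto)
  then show ?thesis using False by (simp only: if_False)
qed

lemma has_sum_sum_fin:
  fixes f :: "'k \<Rightarrow> 'z \<Rightarrow> real"
  assumes "finite I" "\<And>k. k \<in> I \<Longrightarrow> (f k has_sum s k) A"
  shows "((\<lambda>z. \<Sum>k\<in>I. f k z) has_sum (\<Sum>k\<in>I. s k)) A"
  using assms
proof (induction I rule: finite_induct)
  case empty then show ?case by simp
next
  case (insert k I)
  then have "((\<lambda>z. f k z + (\<Sum>k\<in>I. f k z)) has_sum (s k + (\<Sum>k\<in>I. s k))) A"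
    by (intro has_sum_add) (use insert in auto)
  then show ?case using insert by simp
qed

lemma eqv: "(z - x = d) = (z = (\<lambda>c. x c + d c))" for z x d :: "'n \<Rightarrow> int"
  by (auto simp: fun_eq_iff algebra_simps)

lemma ifmul: "(if Q \<and> z - x = d then r else 0) * ((F z::real) - F x)
   = (if Q \<and> z = (\<lambda>c. x c + d c) then r * (F (\<lambda>c. x c + d c) - F x) else 0)"
  for z x d :: "'n \<Rightarrow> int"
  by (auto simp: eqv)

lemma ifmul0: "(if z - x = d then r else 0) * ((F z::real) - F x)
   = (if z = (\<lambda>c. x c + d c) then r * (F (\<lambda>c. x c + d c) - F x) else 0)"
  for z x d :: "'n \<Rightarrow> int"
  by (auto simp: eqv)

lemma has_sum_single:
  "((\<lambda>z. if z = a then c else 0) has_sum (if a \<in> A then c else (0::real))) A"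
  using has_sum_single_if[of True a c A] by simp

lemma sum_unitv: "(\<Sum>j\<in>UNIV. g j * real_of_int (unitv k j)) = (g (k::'n::finite) :: real)"
proof -
  have "(\<Sum>j\<in>UNIV. g j * real_of_int (unitv k j)) = (\<Sum>j\<in>UNIV. if j = k then g j else 0)"
    by (rule sum.cong) (auto simp: unitv_def)
  then show ?thesis by simp
qed

lemma gen_formula:
  fixes P :: "real^'n^'n::finite" and a :: "'n \<Rightarrow> real" and x :: "'n \<Rightarrow> int"
  assumes apos: "\<And>j. 0 < a j" and x: "x \<in> nonneg_states" and P_diag: "\<And>i. P$i$i = 0"
  shows "generator lam mu P (\<lambda>y. exp (\<Sum>j\<in>UNIV. ln (a j) * real_of_int (y j))) x
    = exp (\<Sum>j\<in>UNIV. ln (a j) * real_of_int (x j)) * (\<Sum>k\<in>UNIV. lam k * (a k - 1)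
         + (if 0 < x k then mu k * ((exit_prob P k + (\<Sum>j\<in>UNIV. P$k$j * a j)) / a k - 1) else 0))"
proof -
  define F where "F = (\<lambda>y::'n \<Rightarrow> int. exp (\<Sum>j\<in>UNIV. ln (a j) * real_of_int (y j)))"
  define xp where "xp k = (\<lambda>c. x c + unitv k c)" for k
  define xm where "xm k = (\<lambda>c. x c + (- unitv k) c)" for k
  define xt where "xt k j = (\<lambda>c. x c + (unitv j - unitv k) c)" for k j
  have Fsh: "F (\<lambda>c. x c + d c) = F x * exp (\<Sum>j\<in>UNIV. ln (a j) * real_of_int (d j))" for d
    unfolding F_def by (simp add: distrib_left sum.distrib exp_add)
  have Fp: "F (xp k) = F x * a k" for k
    unfolding xp_def Fsh sum_unitv using apos[of k] by simp
  have Fm: "F (xm k) = F x * (1 / a k)" for k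
  proof -
    have "(\<Sum>j\<in>UNIV. ln (a j) * real_of_int ((- unitv k) j)) = - ln (a k)"
      using sum_unitv[of "\<lambda>j. - ln (a j)" k] by simp
    then show ?thesis unfolding xm_def Fsh using apos[of k] by (simp add: exp_minus field_simps)
  qed
  have Ft: "F (xt k j) = F x * (a j / a k)" for k j
  proof -
    have "(\<Sum>c\<in>UNIV. ln (a c) * real_of_int ((unitv j - unitv k) c)) = ln (a j) - ln (a k)"
      using sum_unitv[of "\<lambda>c. ln (a c)" j] sum_unitv[of "\<lambda>c. ln (a c)" k]
      by (simp add: right_diff_distrib sum_subtractf)
    then show ?thesis unfolding xt_def Fsh using apos[of k] apos[of j] by (simp add: exp_diff)
  qed
  have x0: "0 \<le> x c" for c using x unfolding nonneg_states_def by simp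
  have mp: "xp k \<in> nonneg_states" for k
    using x0 unfolding xp_def nonneg_states_def unitv_def by (simp add: add_nonneg_nonneg)
  have mm: "xm k \<in> nonneg_states \<longleftrightarrow> 0 < x k" for k
    using x0 unfolding xm_def nonneg_states_def unitv_def
    by (auto simp: add_nonneg_nonneg)
  have mt: "xt k j \<in> nonneg_states \<longleftrightarrow> 0 < x k" if "j \<noteq> k" for k j
    using x0[of k] x0 that unfolding xt_def nonneg_states_def unitv_def
    by (auto simp: add_nonneg_nonneg)
  have dec: "jrate lam mu P (z - x) * (F z - F x) = (\<Sum>k\<in>UNIV.
      (if z = xp k then lam k * (F (xp k) - F x) else 0)
    + (if z = xm k then mu k * exit_prob P k * (F (xm k) - F x) else 0)
    + (\<Sum>j\<in>UNIV. if j \<noteq> k \<and> z = xt k j then mu k * P$k$j * (F (xt k j) - F x) else 0))" for z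
    unfolding jrate_def xp_def xm_def xt_def by (simp only: sum_distrib_right distrib_right ifmul ifmul0)
  have hs: "((\<lambda>z. jrate lam mu P (z - x) * (F z - F x)) has_sum (\<Sum>k\<in>UNIV.
      (if xp k \<in> nonneg_states then lam k * (F (xp k) - F x) else 0)
    + (if xm k \<in> nonneg_states then mu k * exit_prob P k * (F (xm k) - F x) else 0)
    + (\<Sum>j\<in>UNIV. if j \<noteq> k \<and> xt k j \<in> nonneg_states then mu k * P$k$j * (F (xt k j) - F x) else 0))) nonneg_states"
    unfolding dec by (intro has_sum_sum_fin has_sum_add has_sum_single has_sum_single_if) auto
  have g: "generator lam mu P F x = (\<Sum>k\<in>UNIV.
      (if xp k \<in> nonneg_states then lam k * (F (xp k) - F x) else 0)
    + (if xm k \<in> nonneg_states then mu k * exit_prob P k * (F (xm k) - F x) else 0)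
    + (\<Sum>j\<in>UNIV. if j \<noteq> k \<and> xt k j \<in> nonneg_states then mu k * P$k$j * (F (xt k j) - F x) else 0))"
    unfolding generator_def by (rule infsumI[OF hs])
  also have "\<dots> = F x * (\<Sum>k\<in>UNIV. lam k * (a k - 1)
         + (if 0 < x k then mu k * ((exit_prob P k + (\<Sum>j\<in>UNIV. P$k$j * a j)) / a k - 1) else 0))"
    unfolding sum_distrib_left
  proof (rule sum.cong[OF refl])
    fix k
    have ak: "a k > 0" by (rule apos)
    show "(if xp k \<in> nonneg_states then lam k * (F (xp k) - F x) else 0)
    + (if xm k \<in> nonneg_states then mu k * exit_prob P k * (F (xm k) - F x) else 0)
    + (\<Sum>j\<in>UNIV. if j \<noteq> k \<and> xt k j \<in> nonneg_states then mu k * P$k$j * (F (xt k j) - F x) else 0)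
      = F x * (lam k * (a k - 1)
         + (if 0 < x k then mu k * ((exit_prob P k + (\<Sum>j\<in>UNIV. P$k$j * a j)) / a k - 1) else 0))"
    proof (cases "0 < x k")
      case False
      have "(\<Sum>j\<in>UNIV. if j \<noteq> k \<and> xt k j \<in> nonneg_states then mu k * P$k$j * (F (xt k j) - F x) else 0) = 0"
        by (rule sum.neutral) (use mt False in auto)
      then show ?thesis using False mp[of k] mm[of k] mt[of _ k] Fp[of k] by (simp add: algebra_simps)
    next
      case True
      have "(\<Sum>j\<in>UNIV. if j \<noteq> k \<and> xt k j \<in> nonneg_states then mu k * P$k$j * (F (xt k j) - F x) else 0)
          = (\<Sum>j\<in>UNIV. mu k * F x * (P$k$j * a j / a k - P$k$j))"
      proof (rule sum.cong[OF refl])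
        fix j
        show "(if j \<noteq> k \<and> xt k j \<in> nonneg_states then mu k * P$k$j * (F (xt k j) - F x) else 0)
            = mu k * F x * (P$k$j * a j / a k - P$k$j)"
          using True mt[of j k] Ft[of k j] P_diag[of k] by (cases "j = k") (auto simp: algebra_simps)
      qed
      also have "\<dots> = mu k * F x * ((\<Sum>j\<in>UNIV. P$k$j * a j) / a k - (\<Sum>j\<in>UNIV. P$k$j))"
        by (simp only: sum_distrib_left[symmetric] sum_subtractf sum_divide_distrib)
      finally have e3: "(\<Sum>j\<in>UNIV. if j \<noteq> k \<and> xt k j \<in> nonneg_states then mu k * P$k$j * (F (xt k j) - F x) else 0)
          = mu k * F x * ((\<Sum>j\<in>UNIV. P$k$j * a j) / a k - (\<Sum>j\<in>UNIV. P$k$j))" .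
      have ep: "exit_prob P k = 1 - (\<Sum>j\<in>UNIV. P$k$j)" unfolding exit_prob_def ..
      show ?thesis unfolding e3 Fm Fp using True mp[of k] mm[of k] ak
        by (simp add: ep field_simps)
    qed
  qed
  finally show ?thesis unfolding F_def .
qed


theorem lemma5p1:
  fixes lam mu nu gam :: "'n::finite \<Rightarrow> real" and P :: "real^'n^'n"
  assumes lam_nonneg: "\<And>i. 0 \<le> lam i"
    and mu_pos: "\<And>i. 0 < mu i"
    and P_nonneg: "\<And>i j. 0 \<le> P$i$j"
    and P_diag: "\<And>i. P$i$i = 0"
    and P_rows: "\<And>i. (\<Sum>j\<in>UNIV. P$i$j) \<le> 1"
    and A: "hypA lam mu P"
    and traffic: "\<And>j. nu j = lam j + (\<Sum>i\<in>UNIV. nu i * P$i$j)"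
    and gam_nonneg: "\<And>i. 0 \<le> gam i"
    and x: "x \<in> nonneg_states"
  shows "generator lam mu P
           (\<lambda>y. exp (\<Sum>j\<in>UNIV. ln (1 + hitQ P j i * gam i) * real_of_int (y j))) x
         = gam i / (greenG P)$i$i
             * (nu i - (if x i > 0 then mu i / (1 + gam i) else 0))
             * exp (\<Sum>j\<in>UNIV. ln (1 + hitQ P j i * gam i) * real_of_int (x j))"
proof -
  define q where "q j = hitQ P j i" for j
  define g where "g = gam i"
  define a where "a j = 1 + q j * g" for j
  define s where "s = (\<Sum>m\<in>UNIV. P$i$m * q m)"
  define H where "H = (greenG P)$i$i"
  define E where "E = exp (\<Sum>j\<in>UNIV. ln (a j) * real_of_int (x j))"
  have q0: "0 \<le> q j" for j unfolding q_def by (rule hitQ_nonneg[OF P_nonneg P_rows])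
  have g0: "0 \<le> g" unfolding g_def by (rule gam_nonneg)
  have apos: "0 < a j" for j unfolding a_def using q0[of j] g0 by (simp add: add_pos_nonneg)
  have qi: "q i = 1" unfolding q_def by (rule hitQ_diag)
  have qstep: "\<And>k. k \<noteq> i \<Longrightarrow> q k = (\<Sum>m\<in>UNIV. P$k$m * q m)"
    unfolding q_def by (rule hitQ_step[OF P_nonneg P_rows])
  have inv: "invertible (mat 1 - P)" by (rule invertible_IP[OF mu_pos P_nonneg P_rows A])
  have L1: "1 = (1 - s) * H" and L2: "(\<Sum>j\<in>UNIV. lam j * q j) = (1 - s) * nu i"
    using lin_facts[OF inv traffic qi qstep] unfolding s_def H_def by auto
  have gen: "generator lam mu P (\<lambda>y. exp (\<Sum>j\<in>UNIV. ln (a j) * real_of_int (y j))) x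
    = E * (\<Sum>k\<in>UNIV. lam k * (a k - 1)
         + (if 0 < x k then mu k * ((exit_prob P k + (\<Sum>j\<in>UNIV. P$k$j * a j)) / a k - 1) else 0))"
    unfolding E_def by (rule gen_formula[OF apos x P_diag])
  have ek: "exit_prob P k + (\<Sum>j\<in>UNIV. P$k$j * a j) = 1 + g * (\<Sum>j\<in>UNIV. P$k$j * q j)" for k
    unfolding exit_prob_def a_def by (simp add: distrib_left sum.distrib sum_distrib_left algebra_simps)
  define B where "B k = (if 0 < x k then mu k * ((exit_prob P k + (\<Sum>j\<in>UNIV. P$k$j * a j)) / a k - 1) else 0)" for k
  have Bk: "B k = (if k = i then B i else 0)" for k
  proof (cases "k = i")
    case False
    have "exit_prob P k + (\<Sum>j\<in>UNIV. P$k$j * a j) = a k"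
      unfolding ek unfolding a_def using qstep[OF False] by (simp add: algebra_simps)
    then show ?thesis using False apos[of k] unfolding B_def by simp
  qed simp
  have sumB: "(\<Sum>k\<in>UNIV. B k) = B i"
    by (subst sum.cong[OF refl Bk]) simp
  have Bi: "B i = (if 0 < x i then mu i * (g * (s - 1) / (1 + g)) else 0)"
  proof -
    have "(1 + g * s) / (1 + g) - 1 = g * (s - 1) / (1 + g)" using g0 by (simp add: field_simps)
    then show ?thesis unfolding B_def ek s_def[symmetric] using qi unfolding a_def by simp
  qed
  have sumA: "(\<Sum>k\<in>UNIV. lam k * (a k - 1)) = g * (1 - s) * nu i"
  proof -
    have "(\<Sum>k\<in>UNIV. lam k * (a k - 1)) = g * (\<Sum>k\<in>UNIV. lam k * q k)"
      unfolding a_def sum_distrib_left by (rule sum.cong) (simp_all add: algebra_simps)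
    then show ?thesis using L2 by simp
  qed
  have T: "generator lam mu P (\<lambda>y. exp (\<Sum>j\<in>UNIV. ln (a j) * real_of_int (y j))) x
     = E * (g * (1 - s) * nu i + (if 0 < x i then mu i * (g * (s - 1) / (1 + g)) else 0))"
    unfolding gen sum.distrib B_def[symmetric] sumB Bi sumA ..
  have Hs: "1 - s = 1 / H" using L1 by (metis nonzero_eq_divide_eq mult_zero_left zero_neq_one mult.commute)
  have s1: "s - 1 = - (1 / H)" using Hs by simp
  have fin: "E * (g * (1 - s) * nu i + (if 0 < x i then mu i * (g * (s - 1) / (1 + g)) else 0))
     = g / H * (nu i - (if x i > 0 then mu i / (1 + g) else 0)) * E"
  proof -
    have Hnz: "H \<noteq> 0" using L1 by auto
    have gnz: "1 + g \<noteq> 0" using g0 by simp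
    have "H * (1 + g) \<noteq> 0" using Hnz gnz by simp
    then have hg: "H + H * g \<noteq> 0" by (simp add: distrib_left)
    show ?thesis unfolding s1 Hs using Hnz gnz hg by (auto simp: field_simps)
  qed
  have ea: "(\<lambda>y. exp (\<Sum>j\<in>UNIV. ln (1 + hitQ P j i * gam i) * real_of_int (y j)))
      = (\<lambda>y. exp (\<Sum>j\<in>UNIV. ln (a j) * real_of_int (y j)))"
    unfolding a_def q_def g_def ..
  have eE: "exp (\<Sum>j\<in>UNIV. ln (1 + hitQ P j i * gam i) * real_of_int (x j)) = E"
    unfolding E_def a_def q_def g_def ..
  show ?thesis unfolding ea eE T fin unfolding H_def g_def ..
qed

end
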